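(* Let $N\ge0$ and let $(X,Z)$ be complex $N\times N$ matrices with $\operatorname{rank}([X,Z]+I)=1$ and all eigenvalues of $Z$ in the open unit disk. Put $b^C(X,Z)=(I+Z^t,\;X^t(I+Z^t))$. Then $b^C(X,Z)\in C_N^{\rm trig}$ and $\beta^{\rm trig}(b^C(X,Z))=b(\beta(X,Z))$; that is, the stationary Baker–Akhiezer functions satisfy $\psi_{\beta^{\rm trig}(b^C(X,Z))}(x,z)=\psi_{\beta(X,Z)}(z,e^x-1)$. In other words the square formed by $\beta:\bigcup_NC_N\to{\rm Fl}^{\rm ad}$, $b^C:\bigcup_NC_N\to\bigcup_NC_N^{\rm trig}$, $b:{\rm Fl}^{\rm ad}\to{\rm Gr}^{\rm trig}$ and $\beta^{\rm trig}:\bigcup_NC_N^{\rm trig}\to{\rm Gr}^{\rm trig}$ commutes.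
   Context: $C_N^{\rm trig}$ is the set of pairs $(X,Z)$, $X\in GL(N,\mathbb{C})$, $Z\in gl(N,\mathbb{C})$, with $\operatorname{rank}(XZX^{-1}-Z+I)=1$, modulo simultaneous conjugation; $C_N$ is the set of pairs with $\operatorname{rank}([X,Z]+I)=1$ and spectrum of $Z$ in the open unit disk, modulo simultaneous conjugation. Segal–Wilson setting: $S^1$ unit circle, $H=L^2(S^1)=H_+\oplus H_-$, ${\rm Gr}$ the closed $W\subset H$ with $W\to H_+$ Fredholm of index $0$ and $W\to H_-$ compact; $\exp(t,z)=\exp(\sum_kt_kz^k)$; the Baker–Akhiezer function $\psi_W(t,z)=\exp(t,z)\tilde\psi_W(t,z)$, $\tilde\psi_W$ the unique element of $\exp^{-1}(t,z)W$ projecting to $1$; the stationary one $\psi_W(x,z)=\psi_W((x,0,0,\dots),z)$; the tau function $\tau_W$ (up to constant) with $\psi_W(t,z)=\exp(t,z)\tau_W(t_1-\frac1z,t_2-\frac1{2z^2},\dots)/\tau_W(t)$. $A_W=\{f$ analytic near $S^1:fW^{\rm alg}\subset W^{\rm alg}\}$, $W^{\rm alg}$ the finite-order elements of $W$; ${\rm Gr}^{\rm rat}$: $\operatorname{Spec}A_W$ rational; ${\rm Gr}^{\rm ad}$: $W\in{\rm Gr}^{\rm rat}$ with $\mathbb{C}\to\operatorname{Spec}(A_W)$ bijective. ${\rm Gr}^{\rm trig}$: $W\in{\rm Gr}^{\rm rat}$ with $\tau_W(t)=\det\{I-X\exp\{\sum_kt_k((Z-I)^k-Z^k)\}\}$ for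 some $(X,Z)\in C_N^{\rm trig}$; for such $(X,Z)$, $\beta^{\rm trig}(X,Z)$ is this space $W$, whose stationary Baker–Akhiezer function is $\psi_W(x,z)=e^{xz}\det\{I-X(e^xI-X)^{-1}(zI-Z)^{-1}\}$. For $W\in{\rm Gr}^{\rm ad}$ put $\psi(n,t,z)=(1+z)^n\exp(t,z)\tau_W(t_1+n-\frac1z,t_2-\frac n2-\frac1{2z^2},t_3+\frac n3-\frac1{3z^3},\dots)/\tau_W(t_1+n,t_2-\frac n2,t_3+\frac n3,\dots)$ and let $V_n$ be the closure of the span of $\psi(m,0,z)$, $m\ge n$; ${\rm Fl}^{\rm ad}$ is the set of the resulting flags $\mathcal{V}=(V_n)$, with stationary Baker–Akhiezer function $\psi_{\mathcal{V}}(n,z)=\psi(n,0,z)$. $\beta(X,Z)$ for $(X,Z)\in C_N$ is the adelic flag with $\psi_{\mathcal{V}}(n,z)=(1+z)^n\det\{I+(X-n(I+Z)^{-1})^{-1}(zI-Z)^{-1}\}$. The bispectral map $b:{\rm Fl}^{\rm ad}\to{\rm Gr}^{\rm trig}$ sends $\mathcal{V}$ to the space $b(\mathcal{V})$ with stationary Baker–Akhiezer function $\psi_{b(\mathcal{V})}(x,z)=\psi_{\mathcal{V}}(z,e^x-1)$. *)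

theory Defs
  imports "HOL-Analysis.Analysis"
begin

text \<open>Complex N x N matrices are rendered as complex^'n^'n with 'n a finite index type
  (N = CARD('n) \<ge> 1; the case N = 0 is vacuous since rank([X,Z]+I)=1 is impossible).\<close>

definition is_eigenvalue :: "complex^'n^'n \<Rightarrow> complex \<Rightarrow> bool" where
  "is_eigenvalue A c \<longleftrightarrow> (\<exists>v. v \<noteq> 0 \<and> A *v v = c *s v)"

definition in_CN :: "complex^'n^'n \<Rightarrow> complex^'n^'n \<Rightarrow> bool" where
  "in_CN X Z \<longleftrightarrow> rank (X ** Z - Z ** X + mat 1) = 1 \<and>
                 (\<forall>c. is_eigenvalue Z c \<longrightarrow> cmod c < 1)"

definition in_CN_trig :: "complex^'n^'n \<Rightarrow> complex^'n^'n \<Rightarrow> bool" where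
  "in_CN_trig X Z \<longleftrightarrow> invertible X \<and> rank (X ** Z ** matrix_inv X - Z + mat 1) = 1"

definition bC :: "complex^'n^'n \<Rightarrow> complex^'n^'n \<Rightarrow> (complex^'n^'n) \<times> (complex^'n^'n)" where
  "bC X Z = (mat 1 + transpose Z, transpose X ** (mat 1 + transpose Z))"

definition psi_trig :: "complex^'n^'n \<Rightarrow> complex^'n^'n \<Rightarrow> complex \<Rightarrow> complex \<Rightarrow> complex" where
  "psi_trig X Z x z = exp (x * z) *
     det (mat 1 - X ** matrix_inv (mat (exp x) - X) ** matrix_inv (mat z - Z))"

definition psi_flag :: "complex^'n^'n \<Rightarrow> complex^'n^'n \<Rightarrow> int \<Rightarrow> complex \<Rightarrow> complex" where
  "psi_flag X Z n w = (1 + w) powi n *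
     det (mat 1 + matrix_inv (X - mat (of_int n) ** matrix_inv (mat 1 + Z)) ** matrix_inv (mat w - Z))"

text \<open>Stationary Baker--Akhiezer function of $b(\beta(X,Z))$, i.e. $\psi_{\beta(X,Z)}(z, e^x - 1)$,
  where the discrete variable n is replaced by the continuous z; the factor
  $(1+w)^n$ at $w = e^x-1$ equals $e^{xn}$ and is continued as $e^{xz}$.\<close>
definition psi_b_flag :: "complex^'n^'n \<Rightarrow> complex^'n^'n \<Rightarrow> complex \<Rightarrow> complex \<Rightarrow> complex" where
  "psi_b_flag X Z x z = exp (x * z) *
     det (mat 1 + matrix_inv (X - mat z ** matrix_inv (mat 1 + Z)) ** matrix_inv (mat (exp x - 1) - Z))"

end

theory Submission imports Defs begin

lemma mm_add_r: "((A::'a::comm_ring_1^'n^'m) + B) ** C = A ** C + B ** C"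
  by (simp add: matrix_matrix_mult_def vec_eq_iff sum.distrib algebra_simps)
lemma mm_diff_r: "((A::'a::comm_ring_1^'n^'m) - B) ** C = A ** C - B ** C"
  by (simp add: matrix_matrix_mult_def vec_eq_iff sum_subtractf algebra_simps)
lemma mm_diff_l: "(A::'a::comm_ring_1^'n^'m) ** (B - C) = A ** B - A ** C"
  by (simp add: matrix_matrix_mult_def vec_eq_iff sum_subtractf algebra_simps)
lemma mm_neg_l: "(- (A::'a::comm_ring_1^'n^'m)) ** B = - (A ** B)"
  by (simp add: matrix_matrix_mult_def vec_eq_iff sum_negf)
lemma mm_neg_r: "(A::'a::comm_ring_1^'n^'m) ** (- B) = - (A ** B)"
  by (simp add: matrix_matrix_mult_def vec_eq_iff sum_negf)
lemma mat_mul_l: "mat k ** (A::'a::comm_ring_1^'n^'m) = (\<chi> i j. k * A$i$j)"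
  by (simp add: matrix_matrix_mult_def vec_eq_iff mat_def if_distrib if_distribR sum.delta cong: if_cong)
lemma mat_mul_r: "(A::'a::comm_ring_1^'n^'m) ** mat k = (\<chi> i j. A$i$j * k)"
  by (simp add: matrix_matrix_mult_def vec_eq_iff mat_def if_distrib if_distribR sum.delta' cong: if_cong)
lemma mat_comm: "mat k ** (A::'a::comm_ring_1^'n^'n) = A ** mat k"
  by (simp add: mat_mul_l mat_mul_r mult.commute)
lemma mat_diff: "mat a - mat b = (mat (a - b) :: 'a::comm_ring_1^'n^'n)"
  by (simp add: mat_def vec_eq_iff)
lemma transpose_add: "transpose ((A::'a::comm_ring_1^'n^'m) + B) = transpose A + transpose B"
  by (simp add: transpose_def vec_eq_iff)
lemma transpose_diff: "transpose ((A::'a::comm_ring_1^'n^'m) - B) = transpose A - transpose B"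
  by (simp add: transpose_def vec_eq_iff)
lemma transpose_neg: "transpose (- (A::'a::comm_ring_1^'n^'m)) = - transpose A"
  by (simp add: transpose_def vec_eq_iff)

lemma inv_props:
  fixes A :: "'a::field^'n^'n"
  assumes "invertible A"
  shows "A ** matrix_inv A = mat 1" "matrix_inv A ** A = mat 1"
proof -
  have "\<exists>A'. A ** A' = mat 1 \<and> A' ** A = mat 1" using assms by (simp add: invertible_def)
  from someI_ex[OF this] show "A ** matrix_inv A = mat 1" "matrix_inv A ** A = mat 1"
    by (simp_all add: matrix_inv_def)
qed

lemma inv_unique_l:
  fixes A R :: "'a::field^'n^'n"
  assumes "R ** A = mat 1" shows "matrix_inv A = R"
proof -
  have i: "invertible A" using assms invertible_left_inverse by blast
  have "A ** R = mat 1" using assms matrix_left_right_inverse by blast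
  hence "matrix_inv A = (matrix_inv A ** A) ** R" by (simp add: matrix_mul_assoc[symmetric])
  thus ?thesis using inv_props(2)[OF i] by simp
qed

lemma rank1_transpose:
  fixes A :: "'a::field^'n^'m"
  assumes "rank A = 1" shows "rank (transpose A) = 1"
proof -
  have d: "vec.dim (rows A) = 1" using assms by (simp add: row_rank_def_gen)
  obtain B where B: "B \<subseteq> rows A" "vec.independent B" "rows A \<subseteq> vec.span B" "card B = 1"
    using vec.basis_exists[of "rows A"] d by metis
  then obtain v where Bv: "B = {v}" by (auto simp: card_1_singleton_iff)
  have v0: "v \<noteq> 0" using B(2) Bv by simp
  have "\<forall>i. \<exists>c. A $ i = c *s v"
  proof
    fix i
    have "row i A \<in> rows A" by (auto simp: rows_def)
    hence "row i A \<in> vec.span {v}" using B(3) Bv by auto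
    moreover have "row i A = A $ i" by (simp add: row_def vec_eq_iff)
    ultimately show "\<exists>c. A $ i = c *s v" by (auto simp: vec.span_singleton)
  qed
  then obtain c where c: "\<And>i. A $ i = c i *s v" by metis
  define u where "u = (\<chi> i. c i)"
  have col: "\<And>j. column j A = v $ j *s u" by (simp add: column_def u_def c vec_eq_iff mult.commute)
  obtain j where vj: "v $ j \<noteq> 0" using v0 by (metis vec_eq_iff zero_index)
  obtain i where "v = row i A" using B(1) Bv by (auto simp: rows_def)
  hence "v = c i *s v" by (simp add: row_def c vec_eq_iff)
  hence "c i \<noteq> 0" using v0 by auto
  hence u0: "u \<noteq> 0" by (metis u_def vec_lambda_beta zero_index)
  have cj0: "column j A \<noteq> 0" using col vj u0 by simp
  have r: "rows (transpose A) = columns A" by simp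
  have "columns A \<subseteq> vec.span {u}" by (auto simp: columns_def col vec.span_singleton)
  hence le: "vec.dim (columns A) \<le> 1" using vec.dim_le_card[of "columns A" "{u}"] by simp
  have "{column j A} \<subseteq> columns A" by (auto simp: columns_def)
  moreover have "vec.independent {column j A}" using cj0 by simp
  ultimately have "card {column j A} \<le> vec.dim (columns A)" by (rule vec.independent_card_le_dim)
  hence "1 \<le> vec.dim (columns A)" by simp
  thus ?thesis using le by (simp add: row_rank_def_gen)
qed

lemma mv_add: "((A::'a::comm_ring_1^'n^'m) + B) *v x = A *v x + B *v x"
  by (simp add: matrix_vector_mult_def vec_eq_iff sum.distrib algebra_simps)

theorem mainTheorem5:
  fixes X Z :: "complex^'n^'n"
  assumes "in_CN X Z"
  shows "in_CN_trig (fst (bC X Z)) (snd (bC X Z)) \<and>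
    (\<forall>x z::complex.
       invertible (mat (exp x) - fst (bC X Z)) \<longrightarrow>
       invertible (mat z - snd (bC X Z)) \<longrightarrow>
       invertible (X - mat z ** matrix_inv (mat 1 + Z)) \<longrightarrow>
       invertible (mat (exp x - 1) - Z) \<longrightarrow>
       psi_trig (fst (bC X Z)) (snd (bC X Z)) x z = psi_b_flag X Z x z)"
proof -
  define B where "B = mat 1 + Z"
  have rk: "rank (X ** Z - Z ** X + mat 1) = 1"
    and eig: "\<And>c. is_eigenvalue Z c \<Longrightarrow> cmod c < 1" using assms by (auto simp: in_CN_def)
  have ker: "\<forall>v. B *v v = 0 \<longrightarrow> v = 0"
  proof (intro allI impI)
    fix v assume h: "B *v v = 0"
    hence "v + Z *v v = 0" by (simp add: B_def mv_add)
    hence "Z *v v = (-1) *s v" by (simp add: vec_eq_iff add_eq_0_iff)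
    show "v = 0"
    proof (rule ccontr)
      assume "v \<noteq> 0"
      hence "is_eigenvalue Z (-1)" using \<open>Z *v v = (-1) *s v\<close> by (auto simp: is_eigenvalue_def)
      thus False using eig by fastforce
    qed
  qed
  hence invB: "invertible B" using invertible_left_inverse matrix_left_invertible_ker by blast
  define Bi where "Bi = matrix_inv B"
  have BBi: "B ** Bi = mat 1" and BiB: "Bi ** B = mat 1" using inv_props[OF invB] by (simp_all add: Bi_def)
  define Bt where "Bt = transpose B"
  have Bt_eq: "Bt = mat 1 + transpose Z" by (simp add: Bt_def B_def transpose_add)
  have "transpose Bi ** Bt = mat 1" using BBi by (metis Bt_def matrix_transpose_mul transpose_mat)
  hence invBt: "invertible Bt" and iBt: "matrix_inv Bt = transpose Bi"
    using invertible_left_inverse inv_unique_l by blast+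
  have fstb: "fst (bC X Z) = Bt" and sndb: "snd (bC X Z) = transpose X ** Bt"
    by (simp_all add: bC_def Bt_eq)
  have part1: "in_CN_trig Bt (transpose X ** Bt)"
  proof -
    have "Bt ** (transpose X ** Bt) ** matrix_inv Bt = Bt ** transpose X"
      using inv_props(1)[OF invBt] by (simp add: matrix_mul_assoc[symmetric])
    moreover have "X ** B = X + X ** Z" by (simp add: B_def matrix_add_ldistrib)
    moreover have "B ** X = X + Z ** X" by (simp add: B_def mm_add_r)
    ultimately have "Bt ** (transpose X ** Bt) ** matrix_inv Bt - transpose X ** Bt + mat 1
        = transpose (X ** Z - Z ** X + mat 1)"
      by (simp add: Bt_def transpose_add transpose_diff matrix_transpose_mul[symmetric])
    thus ?thesis using rank1_transpose[OF rk] invBt by (simp add: in_CN_trig_def)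
  qed
  have part2: "psi_trig Bt (transpose X ** Bt) x z = psi_b_flag X Z x z"
    if h1: "invertible (mat (exp x) - Bt)" and h2: "invertible (mat z - transpose X ** Bt)"
    for x z :: complex
  proof -
    define W where "W = mat (exp x - 1) - Z"
    define Wi where "Wi = matrix_inv W"
    define P where "P = mat z - B ** X"
    define M where "M = X - mat z ** Bi"
    have WT: "mat (exp x) - Bt = transpose W"
      by (simp add: W_def Bt_eq transpose_diff flip: mat_diff)
    have PT: "mat z - transpose X ** Bt = transpose P"
      by (simp add: P_def Bt_def transpose_diff matrix_transpose_mul)
    define Q where "Q = matrix_inv (transpose W)"
    have "transpose W ** Q = mat 1" using inv_props(1)[OF h1[unfolded WT]] by (simp add: Q_def)
    hence "transpose (transpose W ** Q) = mat 1" by simp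
    hence tQW: "transpose Q ** W = mat 1" by (simp add: matrix_transpose_mul)
    have WiQ: "Wi = transpose Q" unfolding Wi_def using tQW by (rule inv_unique_l)
    have invW: "invertible W" using tQW invertible_left_inverse by blast
    have WWi: "W ** Wi = mat 1" and WiW: "Wi ** W = mat 1" using inv_props[OF invW] by (simp_all add: Wi_def)
    define R where "R = matrix_inv (transpose P)"
    have "transpose P ** R = mat 1" using inv_props(1)[OF h2[unfolded PT]] by (simp add: R_def)
    hence "transpose (transpose P ** R) = mat 1" by simp
    hence PiP: "transpose R ** P = mat 1" by (simp add: matrix_transpose_mul)
    have ZB: "Z ** B = B ** Z" by (simp add: B_def matrix_add_ldistrib mm_add_r)
    have WB: "W ** B = B ** W"
      by (simp add: W_def mm_diff_r mm_diff_l ZB mat_comm[of _ B])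
    have WiB: "Wi ** B = B ** Wi"
    proof -
      have "Wi ** B = Wi ** B ** (W ** Wi)" by (simp add: WWi)
      also have "\<dots> = Wi ** (W ** B) ** Wi" by (simp add: WB matrix_mul_assoc)
      also have "\<dots> = B ** Wi" by (simp add: WiW matrix_mul_assoc)
      finally show ?thesis .
    qed
    have "B ** (mat z ** Bi) = (B ** mat z) ** Bi" by (simp add: matrix_mul_assoc)
    also have "\<dots> = mat z ** (B ** Bi)" by (simp add: mat_comm[of z B] matrix_mul_assoc)
    also have "\<dots> = mat z" by (simp add: BBi)
    finally have "B ** (mat z ** Bi) = mat z" .
    hence BM: "B ** M = - P" by (simp add: M_def P_def mm_diff_l)
    have "(- (transpose R ** B)) ** M = mat 1"
      by (simp add: mm_neg_l matrix_mul_assoc[symmetric] BM mm_neg_r PiP)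
    hence Mi: "matrix_inv M = - (transpose R ** B)" by (rule inv_unique_l)
    have "transpose (mat 1 - Bt ** Q ** R) = mat 1 - transpose R ** Wi ** B"
      by (simp add: transpose_diff matrix_transpose_mul Bt_def WiQ matrix_mul_assoc)
    also have "\<dots> = mat 1 + matrix_inv M ** Wi"
      by (simp add: Mi mm_neg_l WiB flip: matrix_mul_assoc)
    finally have "det (mat 1 - Bt ** Q ** R) = det (mat 1 + matrix_inv M ** Wi)"
      by (metis det_transpose)
    thus ?thesis
      by (simp add: psi_trig_def psi_b_flag_def WT PT Q_def R_def M_def Wi_def W_def Bi_def B_def)
  qed
  show ?thesis using part1 part2 by (simp add: fstb sndb)
qed

end
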